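(* Fix $t\ge2$ and $\alpha>1$, let $\theta_1,\dots,\theta_{t-1}\in\Theta$ be fixed, and let $\tau_1,\dots,\tau_{t-1}$ be independent with $\tau_i\sim p_{\theta_i}$. For every $\theta\in\Theta$ with $\eta_t(\theta)>0$ and every $\epsilon\ge0$, $$\mathbb P\left(\check J_t(\theta)-J(\theta)>\epsilon\right)\le\exp\left[-\frac{\epsilon^2\eta_t(\theta)}{2\left(1+\frac{\epsilon}{3}\sqrt{\frac{\eta_t(\theta)}{\alpha\log t}}\right)}\right].$$ Moreover, if $\epsilon\ge\sqrt{\frac{\alpha\log t}{\eta_t(\theta)}}$, $$\mathbb P\left(J(\theta)-\check J_t(\theta)>\epsilon\right)\le\exp\left[-\frac{\eta_t(\theta)}{2}\left(\epsilon-\sqrt{\frac{\alpha\log t}{\eta_t(\theta)}}\right)^2\right].$$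
   Context: Each parameter $\theta\in\Theta$ defines a policy $\pi_\theta$ of an MDP inducing a trajectory distribution $p_\theta$ (with density $p_\theta(\tau)$); the return satisfies $\mathcal R(\tau)\in[0,1]$ and $J(\theta)=\mathbb E_{\tau\sim p_\theta}[\mathcal R(\tau)]$. For probability measures $P\ll Q$, $d_2(P\|Q)=\int(\frac{dP}{dQ})^2dQ$ ($+\infty$ if $P\not\ll Q$). $\Phi_t=\frac1{t-1}\sum_{i=1}^{t-1}p_{\theta_i}$, $\eta_t(\theta)=\frac{t-1}{d_2(p_\theta\|\Phi_t)}$, truncation $M_t(\theta)=\sqrt{\frac{(t-1)d_2(p_\theta\|\Phi_t)}{\alpha\log t}}$, and $\check J_t(\theta)=\frac{1}{t-1}\sum_{i=1}^{t-1}\min\{M_t(\theta),\frac{p_\theta(\tau_i)}{\Phi_t(\tau_i)}\}\mathcal R(\tau_i)$. *)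

theory Defs
  imports "HOL-Probability.Probability"
begin

definition traj_densities :: "'t measure \<Rightarrow> ('p \<Rightarrow> 't \<Rightarrow> real) \<Rightarrow> bool" where
  "traj_densities mu p \<longleftrightarrow>
     (\<forall>th. p th \<in> borel_measurable mu \<and> (\<forall>x\<in>space mu. 0 \<le> p th x)
           \<and> (\<integral>\<^sup>+ x. ennreal (p th x) \<partial>mu) = 1)"

definition J_ret :: "'t measure \<Rightarrow> ('p \<Rightarrow> 't \<Rightarrow> real) \<Rightarrow> ('t \<Rightarrow> real) \<Rightarrow> 'p \<Rightarrow> real" where
  "J_ret mu p R th = (\<integral> x. R x * p th x \<partial>mu)"

definition Phi_mix :: "('p \<Rightarrow> 't \<Rightarrow> real) \<Rightarrow> (nat \<Rightarrow> 'p) \<Rightarrow> nat \<Rightarrow> 't \<Rightarrow> real" where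
  "Phi_mix p ths t x = (\<Sum>i\<in>{1..<t}. p (ths i) x) / real (t - 1)"

text \<open>Exponentiated 2-Renyi divergence d_2(P||Q) of P = f mu and Q = g mu:
  integral of (dP/dQ)^2 dQ if P << Q, infinity otherwise.\<close>
definition d2_div :: "'t measure \<Rightarrow> ('t \<Rightarrow> real) \<Rightarrow> ('t \<Rightarrow> real) \<Rightarrow> ennreal" where
  "d2_div mu f g =
     (if AE x in mu. g x = 0 \<longrightarrow> f x = 0
      then \<integral>\<^sup>+ x. ennreal (if g x = 0 then 0 else (f x)\<^sup>2 / g x) \<partial>mu
      else \<infinity>)"

definition d2_t :: "'t measure \<Rightarrow> ('p \<Rightarrow> 't \<Rightarrow> real) \<Rightarrow> (nat \<Rightarrow> 'p) \<Rightarrow> nat \<Rightarrow> 'p \<Rightarrow> ennreal" where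
  "d2_t mu p ths t th = d2_div mu (p th) (Phi_mix p ths t)"

definition eta_t :: "'t measure \<Rightarrow> ('p \<Rightarrow> 't \<Rightarrow> real) \<Rightarrow> (nat \<Rightarrow> 'p) \<Rightarrow> nat \<Rightarrow> 'p \<Rightarrow> real" where
  "eta_t mu p ths t th =
     (if d2_t mu p ths t th = \<infinity> then 0 else real (t - 1) / enn2real (d2_t mu p ths t th))"

definition M_t :: "'t measure \<Rightarrow> ('p \<Rightarrow> 't \<Rightarrow> real) \<Rightarrow> (nat \<Rightarrow> 'p) \<Rightarrow> real \<Rightarrow> nat \<Rightarrow> 'p \<Rightarrow> real" where
  "M_t mu p ths \<alpha> t th = sqrt (real (t - 1) * enn2real (d2_t mu p ths t th) / (\<alpha> * ln (real t)))"

definition J_check :: "'t measure \<Rightarrow> ('p \<Rightarrow> 't \<Rightarrow> real) \<Rightarrow> ('t \<Rightarrow> real) \<Rightarrow> (nat \<Rightarrow> 'p) \<Rightarrow> real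
    \<Rightarrow> nat \<Rightarrow> 'p \<Rightarrow> (nat \<Rightarrow> 't) \<Rightarrow> real" where
  "J_check mu p R ths \<alpha> t th xs =
     (\<Sum>i\<in>{1..<t}. min (M_t mu p ths \<alpha> t th) (p th (xs i) / Phi_mix p ths t (xs i)) * R (xs i))
       / real (t - 1)"

end

theory Submission
  imports Defs
begin

lemma exp_aux_F:
  fixes x :: real
  shows "exp x * (1 - x/3) \<le> 1 + 2*x/3 + x\<^sup>2/6"
proof -
  define F where "F = (\<lambda>x::real. 1 + 2*x/3 + x\<^sup>2/6 - exp x * (1 - x/3))"
  define F1 where "F1 = (\<lambda>x::real. 2/3 + x/3 - exp x * (2/3 - x/3))"
  define F2 where "F2 = (\<lambda>x::real. 1/3 - exp x * (1/3 - x/3))"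
  have dF: "(F has_real_derivative F1 x) (at x)" for x
    unfolding F_def F1_def
    by (auto intro!: derivative_eq_intros simp: field_simps power2_eq_square)
  have dF1: "(F1 has_real_derivative F2 x) (at x)" for x
    unfolding F2_def F1_def
    by (auto intro!: derivative_eq_intros simp: field_simps)
  have F2nn: "F2 x \<ge> 0" for x
  proof -
    have "1 - x \<le> exp (-x)" using exp_ge_add_one_self[of "-x"] by simp
    hence "exp x * (1 - x) \<le> exp x * exp (-x)" by (intro mult_left_mono) auto
    hence "exp x * (1 - x) \<le> 1" by (simp add: exp_minus)
    thus ?thesis unfolding F2_def by (simp add: field_simps)
  qed
  have F10: "F1 0 = 0" by (simp add: F1_def)
  have F0: "F 0 = 0" by (simp add: F_def)
  show ?thesis
  proof (cases "x \<ge> 0")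
    case True
    have "F1 y \<ge> 0" if "y \<ge> 0" for y
      using deriv_nonneg_imp_mono[of 0 y F1 F2] dF1 F2nn F10 that by auto
    hence "F 0 \<le> F x"
      using deriv_nonneg_imp_mono[of 0 x F F1] dF True by auto
    thus ?thesis using F0 unfolding F_def by simp
  next
    case False
    have "F1 y \<le> 0" if "y \<le> 0" for y
      using deriv_nonneg_imp_mono[of y 0 F1 F2] dF1 F2nn F10 that by auto
    hence "F 0 \<le> F x"
      using deriv_nonpos_imp_antimono[of x 0 F F1] dF False by auto
    thus ?thesis using F0 unfolding F_def by simp
  qed
qed

lemma exp_bernstein_bound:
  fixes x c :: real
  assumes "x \<le> c" "0 \<le> c" "c < 3"
  shows "exp x \<le> 1 + x + x\<^sup>2 / (2 * (1 - c/3))"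
proof -
  have pos: "1 - x/3 > 0" using assms by simp
  have "exp x \<le> (1 + 2*x/3 + x\<^sup>2/6) / (1 - x/3)"
    using exp_aux_F[of x] pos by (simp add: field_simps)
  also have "\<dots> = 1 + x + x\<^sup>2 / (2 * (1 - x/3))"
    using pos by (simp add: field_simps power2_eq_square)
  also have "x\<^sup>2 / (2 * (1 - x/3)) \<le> x\<^sup>2 / (2 * (1 - c/3))"
  proof (cases "x \<ge> 0")
    case True
    thus ?thesis using assms pos by (intro divide_left_mono mult_pos_pos) auto
  next
    case False
    have "x\<^sup>2 / (2 * (1 - x/3)) \<le> x\<^sup>2 / 2"
      using False by (intro divide_left_mono) auto
    also have "\<dots> \<le> x\<^sup>2 / (2 * (1 - c/3))"
      using assms by (intro divide_left_mono) auto
    finally show ?thesis .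
  qed
  finally show ?thesis by simp
qed

lemma (in prob_space) chernoff_prod:
  fixes Z :: "'i \<Rightarrow> 'a \<Rightarrow> real" and l s :: real and c :: "'i \<Rightarrow> real"
  assumes fin: "finite I" and indep: "indep_vars (\<lambda>_. borel) Z I" and l: "l > 0"
    and mgf: "\<And>i. i \<in> I \<Longrightarrow> (\<integral>\<^sup>+x. ennreal (exp (l * Z i x)) \<partial>M) \<le> ennreal (exp (c i))"
  shows "prob {x\<in>space M. (\<Sum>i\<in>I. Z i x) \<ge> s} \<le> exp (- l * s + (\<Sum>i\<in>I. c i))"
proof -
  have rv[measurable]: "Z i \<in> borel_measurable M" if "i \<in> I" for i
    using indep that unfolding indep_vars_def by blast
  have "ennreal (prob {x\<in>space M. (\<Sum>i\<in>I. Z i x) \<ge> s}) = emeasure M {x\<in>space M. (\<Sum>i\<in>I. Z i x) \<ge> s}"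
    by (simp add: emeasure_eq_measure)
  also have "\<dots> \<le> ennreal (exp (-l * s)) * (\<integral>\<^sup>+x\<in>space M. exp (l * (\<Sum>i\<in>I. Z i x)) \<partial>M)"
    by (intro Chernoff_ineq_nn_integral_ge l) auto
  also have "(\<integral>\<^sup>+x\<in>space M. exp (l * (\<Sum>i\<in>I. Z i x)) \<partial>M) =
             (\<integral>\<^sup>+x. (\<Prod>i\<in>I. ennreal (exp (l * Z i x))) \<partial>M)"
    by (intro nn_integral_cong)
       (simp_all add: sum_distrib_left exp_sum fin prod_ennreal)
  also have "\<dots> = (\<Prod>i\<in>I. \<integral>\<^sup>+x. ennreal (exp (l * Z i x)) \<partial>M)"
    by (intro indep_vars_nn_integral fin indep_vars_compose2[OF indep]) auto
  also have "ennreal (exp (-l * s)) * \<dots> \<le> ennreal (exp (-l * s)) * (\<Prod>i\<in>I. ennreal (exp (c i)))"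
    by (intro mult_left_mono prod_mono_ennreal mgf) auto
  also have "\<dots> = ennreal (exp (-l * s) * (\<Prod>i\<in>I. exp (c i)))"
    by (simp add: prod_ennreal prod_nonneg flip: ennreal_mult)
  also have "exp (-l * s) * (\<Prod>i\<in>I. exp (c i)) = exp (- l * s + (\<Sum>i\<in>I. c i))"
    by (simp add: exp_add exp_sum[OF fin] exp_diff exp_minus field_simps)
  finally show ?thesis
    by (subst (asm) ennreal_le_iff) simp_all
qed

lemma (in prob_space) mgf_upper:
  fixes Y :: "'a \<Rightarrow> real"
  assumes Y[measurable]: "Y \<in> borel_measurable M"
    and bnd: "\<And>x. x \<in> space M \<Longrightarrow> 0 \<le> Y x \<and> Y x \<le> B"
    and l: "l > 0" "l * B < 3"
  shows "(\<integral>\<^sup>+x. ennreal (exp (l * (Y x - expectation Y))) \<partial>M)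
           \<le> ennreal (exp (l\<^sup>2 * expectation (\<lambda>x. (Y x)\<^sup>2) / (2 * (1 - l * B / 3))))"
proof -
  define m where "m = expectation Y"
  define K where "K = 1 / (2 * (1 - l * B / 3))"
  from not_empty obtain x0 where "x0 \<in> space M" by auto
  hence B: "0 \<le> B" using bnd by force
  have K: "K > 0" using l unfolding K_def by (simp add: mult.commute)
  have intY: "integrable M Y"
    by (rule integrable_const_bound[where B = B]) (use bnd in auto)
  have b2: "norm ((Y x)\<^sup>2) \<le> B\<^sup>2" if "x \<in> space M" for x
    using bnd[OF that] by (simp add: power_mono)
  have intY2: "integrable M (\<lambda>x. (Y x)\<^sup>2)"
    by (rule integrable_const_bound[where B = "B\<^sup>2"]) (use b2 in auto)
  have m0: "m \<ge> 0" unfolding m_def by (rule integral_nonneg_AE) (use bnd in auto)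
  have b3: "norm (exp (l * (Y x - m))) \<le> exp (l * B)" if "x \<in> space M" for x
    using bnd[OF that] l m0 by (simp add: mult_left_mono)
  have intE: "integrable M (\<lambda>x. exp (l * (Y x - m)))"
    by (rule integrable_const_bound[where B = "exp (l * B)"]) (use b3 in auto)
  have int2: "integrable M (\<lambda>x. (Y x - m)\<^sup>2)"
    using intY intY2 by (simp add: power2_diff)
  have pw: "exp (l * (Y x - m)) \<le> 1 + l * (Y x - m) + l\<^sup>2 * K * (Y x - m)\<^sup>2"
    if "x \<in> space M" for x
  proof -
    have "l * (Y x - m) \<le> l * B" using bnd[OF that] l m0 by (intro mult_left_mono) auto
    hence "exp (l * (Y x - m)) \<le> 1 + l * (Y x - m) + (l * (Y x - m))\<^sup>2 / (2 * (1 - l * B / 3))"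
      using B l by (intro exp_bernstein_bound) auto
    thus ?thesis by (simp add: K_def power_mult_distrib)
  qed
  have eq: "(\<integral>\<^sup>+x. ennreal (exp (l * (Y x - m))) \<partial>M) = ennreal (\<integral>x. exp (l * (Y x - m)) \<partial>M)"
    by (rule nn_integral_eq_integral[OF intE]) auto
  have "(\<integral>x. exp (l * (Y x - m)) \<partial>M) \<le> (\<integral>x. 1 + l * (Y x - m) + l\<^sup>2 * K * (Y x - m)\<^sup>2 \<partial>M)"
    using pw by (intro integral_mono intE) (auto simp: intY int2)
  also have "\<dots> = 1 + l * (expectation Y - m) + l\<^sup>2 * K * expectation (\<lambda>x. (Y x - m)\<^sup>2)"
    using intY int2 prob_space by simp
  also have "expectation (\<lambda>x. (Y x - m)\<^sup>2) = expectation (\<lambda>x. (Y x)\<^sup>2) - m\<^sup>2"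
    using variance_eq[OF intY intY2] by (simp add: m_def)
  also have "1 + l * (expectation Y - m) + l\<^sup>2 * K * (expectation (\<lambda>x. (Y x)\<^sup>2) - m\<^sup>2)
       \<le> 1 + l\<^sup>2 * K * expectation (\<lambda>x. (Y x)\<^sup>2)"
  proof -
    have "l\<^sup>2 * K * m\<^sup>2 \<ge> 0" using K by simp
    thus ?thesis by (simp add: m_def right_diff_distrib)
  qed
  also have "\<dots> \<le> exp (l\<^sup>2 * K * expectation (\<lambda>x. (Y x)\<^sup>2))"
    by (rule exp_ge_add_one_self)
  finally have le: "(\<integral>x. exp (l * (Y x - m)) \<partial>M) \<le> exp (l\<^sup>2 * K * expectation (\<lambda>x. (Y x)\<^sup>2))" .
  have "l\<^sup>2 * K * expectation (\<lambda>x. (Y x)\<^sup>2) = l\<^sup>2 * expectation (\<lambda>x. (Y x)\<^sup>2) / (2 * (1 - l * B / 3))"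
    by (simp add: K_def)
  thus ?thesis unfolding m_def[symmetric] eq using le by (simp add: ennreal_leI)
qed

lemma (in prob_space) mgf_lower:
  fixes Y :: "'a \<Rightarrow> real"
  assumes Y[measurable]: "Y \<in> borel_measurable M"
    and bnd: "\<And>x. x \<in> space M \<Longrightarrow> 0 \<le> Y x \<and> Y x \<le> B"
    and l: "l > 0"
  shows "(\<integral>\<^sup>+x. ennreal (exp (l * (expectation Y - Y x))) \<partial>M)
           \<le> ennreal (exp (l\<^sup>2 * expectation (\<lambda>x. (Y x)\<^sup>2) / 2))"
proof -
  define m where "m = expectation Y"
  have intY: "integrable M Y"
    by (rule integrable_const_bound[where B = B]) (use bnd in auto)
  have intY2: "integrable M (\<lambda>x. (Y x)\<^sup>2)"
    by (rule integrable_const_bound[where B = "B\<^sup>2"]) (use bnd in \<open>auto intro!: power_mono\<close>)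
  have m0: "m \<ge> 0" unfolding m_def by (rule integral_nonneg_AE) (use bnd in auto)
  have intE: "integrable M (\<lambda>x. exp (l * (m - Y x)))"
    by (rule integrable_const_bound[where B = "exp (l * m)"]) (use bnd l m0 in auto)
  have pw: "exp (l * (m - Y x)) \<le> exp (l * m) * (1 + (- l * Y x) + (- l * Y x)\<^sup>2 / 2)"
    if "x \<in> space M" for x
  proof -
    have "exp (- l * Y x) \<le> 1 + (- l * Y x) + (- l * Y x)\<^sup>2 / (2 * (1 - 0 / 3))"
      by (rule exp_bernstein_bound) (use bnd[OF that] l in auto)
    hence "exp (l * m) * exp (- l * Y x) \<le> exp (l * m) * (1 + (- l * Y x) + (- l * Y x)\<^sup>2 / 2)"
      by (intro mult_left_mono) auto
    thus ?thesis by (simp add: algebra_simps flip: exp_add)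
  qed
  have eq: "(\<integral>\<^sup>+x. ennreal (exp (l * (m - Y x))) \<partial>M) = ennreal (\<integral>x. exp (l * (m - Y x)) \<partial>M)"
    by (rule nn_integral_eq_integral[OF intE]) auto
  have "(\<integral>x. exp (l * (m - Y x)) \<partial>M) \<le> (\<integral>x. exp (l * m) * (1 - l * Y x + l\<^sup>2 / 2 * (Y x)\<^sup>2) \<partial>M)"
    using pw by (intro integral_mono intE) (auto simp: power_mult_distrib intY intY2)
  also have "\<dots> = exp (l * m) * (1 - l * m + l\<^sup>2 / 2 * expectation (\<lambda>x. (Y x)\<^sup>2))"
    using intY intY2 prob_space by (simp add: m_def)
  also have "\<dots> \<le> exp (l * m) * exp (- l * m + l\<^sup>2 / 2 * expectation (\<lambda>x. (Y x)\<^sup>2))"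
  proof (rule mult_left_mono)
    show "1 - l * m + l\<^sup>2 / 2 * expectation (\<lambda>x. (Y x)\<^sup>2) \<le> exp (- l * m + l\<^sup>2 / 2 * expectation (\<lambda>x. (Y x)\<^sup>2))"
      using exp_ge_add_one_self[of "- l * m + l\<^sup>2 / 2 * expectation (\<lambda>x. (Y x)\<^sup>2)"] by linarith
  qed simp
  also have "\<dots> = exp (l\<^sup>2 * expectation (\<lambda>x. (Y x)\<^sup>2) / 2)"
    by (simp flip: exp_add)
  finally have le: "(\<integral>x. exp (l * (m - Y x)) \<partial>M) \<le> exp (l\<^sup>2 * expectation (\<lambda>x. (Y x)\<^sup>2) / 2)" .
  show ?thesis unfolding m_def[symmetric] eq using le by (simp add: ennreal_leI)
qed


lemma (in prob_space) bernstein_upper: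
  fixes Y :: "'i \<Rightarrow> 'a \<Rightarrow> real"
  assumes fin: "finite I" and indep: "indep_vars (\<lambda>_. borel) Y I"
    and bnd: "\<And>i x. i \<in> I \<Longrightarrow> x \<in> space M \<Longrightarrow> 0 \<le> Y i x \<and> Y i x \<le> B"
    and B: "B > 0" and V: "(\<Sum>i\<in>I. expectation (\<lambda>x. (Y i x)\<^sup>2)) \<le> V" "V > 0" and s: "s > 0"
  shows "prob {x\<in>space M. (\<Sum>i\<in>I. Y i x) - (\<Sum>i\<in>I. expectation (Y i)) \<ge> s}
           \<le> exp (- (s\<^sup>2 / (2 * (V + B * s / 3))))"
proof -
  have rv[measurable]: "Y i \<in> borel_measurable M" if "i \<in> I" for i
    using indep that unfolding indep_vars_def by blast
  define D where "D = V + B * s / 3"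
  have "B * s > 0" using B s by simp
  hence D: "D > 0" using V by (simp add: D_def)
  define l where "l = s / D"
  have l: "l > 0" using s D by (simp add: l_def)
  have lB: "l * B < 3"
    using V B s D by (simp add: l_def D_def field_simps)
  define Z where "Z = (\<lambda>i x. Y i x - expectation (Y i))"
  have indZ: "indep_vars (\<lambda>_. borel) Z I"
    unfolding Z_def by (rule indep_vars_compose2[OF indep, where Y = "\<lambda>i y. y - expectation (Y i)"]) auto
  define E where "E = (\<Sum>i\<in>I. expectation (\<lambda>x. (Y i x)\<^sup>2))"
  have P: "prob {x\<in>space M. (\<Sum>i\<in>I. Z i x) \<ge> s}
      \<le> exp (- l * s + (\<Sum>i\<in>I. l\<^sup>2 * expectation (\<lambda>x. (Y i x)\<^sup>2) / (2 * (1 - l * B / 3))))"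
    by (rule chernoff_prod[OF fin indZ l]) (unfold Z_def, rule mgf_upper, use bnd l lB in auto)
  have "(\<Sum>i\<in>I. l\<^sup>2 * expectation (\<lambda>x. (Y i x)\<^sup>2) / (2 * (1 - l * B / 3)))
      = l\<^sup>2 / (2 * (1 - l * B / 3)) * E"
    by (simp add: sum_distrib_left E_def)
  also have "\<dots> \<le> l\<^sup>2 / (2 * (1 - l * B / 3)) * V"
  proof (rule mult_left_mono)
    have "2 * (1 - l * B / 3) > 0" using lB by (simp add: mult.commute)
    thus "0 \<le> l\<^sup>2 / (2 * (1 - l * B / 3))" by simp
  qed (use V in \<open>simp add: E_def\<close>)
  finally have S: "(\<Sum>i\<in>I. l\<^sup>2 * expectation (\<lambda>x. (Y i x)\<^sup>2) / (2 * (1 - l * B / 3)))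
      \<le> l\<^sup>2 / (2 * (1 - l * B / 3)) * V" .
  have A: "- l * s + l\<^sup>2 / (2 * (1 - l * B / 3)) * V = - (s\<^sup>2 / (2 * D))"
  proof -
    have h: "1 - l * B / 3 = V / D" using D by (simp add: l_def D_def field_simps)
    have "l\<^sup>2 / (2 * (1 - l * B / 3)) * V = l\<^sup>2 * D / 2"
      unfolding h using D V by (simp add: field_simps)
    moreover have "- l * s + l\<^sup>2 * D / 2 = - (s\<^sup>2 / (2 * D))"
      using D by (simp add: l_def field_simps power2_eq_square)
    ultimately show ?thesis by (metis (no_types, lifting))
  qed
  have "{x\<in>space M. (\<Sum>i\<in>I. Y i x) - (\<Sum>i\<in>I. expectation (Y i)) \<ge> s} = {x\<in>space M. (\<Sum>i\<in>I. Z i x) \<ge> s}"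
    by (simp add: Z_def sum_subtractf)
  hence "prob {x\<in>space M. (\<Sum>i\<in>I. Y i x) - (\<Sum>i\<in>I. expectation (Y i)) \<ge> s}
     \<le> exp (- l * s + (\<Sum>i\<in>I. l\<^sup>2 * expectation (\<lambda>x. (Y i x)\<^sup>2) / (2 * (1 - l * B / 3))))"
    using P by simp
  also have "\<dots> \<le> exp (- (s\<^sup>2 / (2 * D)))"
    using S A by simp
  finally show ?thesis by (simp add: D_def)
qed

lemma (in prob_space) bernstein_lower:
  fixes Y :: "'i \<Rightarrow> 'a \<Rightarrow> real"
  assumes fin: "finite I" and indep: "indep_vars (\<lambda>_. borel) Y I"
    and bnd: "\<And>i x. i \<in> I \<Longrightarrow> x \<in> space M \<Longrightarrow> 0 \<le> Y i x \<and> Y i x \<le> B"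
    and V: "(\<Sum>i\<in>I. expectation (\<lambda>x. (Y i x)\<^sup>2)) \<le> V" "V > 0" and s: "s > 0"
  shows "prob {x\<in>space M. (\<Sum>i\<in>I. expectation (Y i)) - (\<Sum>i\<in>I. Y i x) \<ge> s}
           \<le> exp (- (s\<^sup>2 / (2 * V)))"
proof -
  have rv[measurable]: "Y i \<in> borel_measurable M" if "i \<in> I" for i
    using indep that unfolding indep_vars_def by blast
  define l where "l = s / V"
  have l: "l > 0" using s V by (simp add: l_def)
  define Z where "Z = (\<lambda>i x. expectation (Y i) - Y i x)"
  have indZ: "indep_vars (\<lambda>_. borel) Z I"
    unfolding Z_def by (rule indep_vars_compose2[OF indep, where Y = "\<lambda>i y. expectation (Y i) - y"]) auto
  define E where "E = (\<Sum>i\<in>I. expectation (\<lambda>x. (Y i x)\<^sup>2))"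
  have P: "prob {x\<in>space M. (\<Sum>i\<in>I. Z i x) \<ge> s}
      \<le> exp (- l * s + (\<Sum>i\<in>I. l\<^sup>2 * expectation (\<lambda>x. (Y i x)\<^sup>2) / 2))"
    by (rule chernoff_prod[OF fin indZ l]) (unfold Z_def, rule mgf_lower, use bnd l in auto)
  have "(\<Sum>i\<in>I. l\<^sup>2 * expectation (\<lambda>x. (Y i x)\<^sup>2) / 2) = l\<^sup>2 / 2 * E"
    by (simp add: sum_distrib_left E_def)
  also have "\<dots> \<le> l\<^sup>2 / 2 * V"
    using V by (intro mult_left_mono) (auto simp: E_def)
  finally have S: "(\<Sum>i\<in>I. l\<^sup>2 * expectation (\<lambda>x. (Y i x)\<^sup>2) / 2) \<le> l\<^sup>2 / 2 * V" .
  have A: "- l * s + l\<^sup>2 / 2 * V = - (s\<^sup>2 / (2 * V))"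
    using V by (simp add: l_def field_simps power2_eq_square)
  have "{x\<in>space M. (\<Sum>i\<in>I. expectation (Y i)) - (\<Sum>i\<in>I. Y i x) \<ge> s} = {x\<in>space M. (\<Sum>i\<in>I. Z i x) \<ge> s}"
    by (simp add: Z_def sum_subtractf)
  hence "prob {x\<in>space M. (\<Sum>i\<in>I. expectation (Y i)) - (\<Sum>i\<in>I. Y i x) \<ge> s}
     \<le> exp (- l * s + (\<Sum>i\<in>I. l\<^sup>2 * expectation (\<lambda>x. (Y i x)\<^sup>2) / 2))"
    using P by simp
  also have "\<dots> \<le> exp (- (s\<^sup>2 / (2 * V)))"
    using S A by simp
  finally show ?thesis .
qed


lemma integrable_mult_bdd:
  fixes f g :: "'a \<Rightarrow> real"
  assumes "integrable N f" "g \<in> borel_measurable N" "\<And>x. x \<in> space N \<Longrightarrow> \<bar>g x\<bar> \<le> B"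
  shows "integrable N (\<lambda>x. f x * g x)"
proof (rule Bochner_Integration.integrable_bound[where f = "\<lambda>x. B * f x"])
  show "integrable N (\<lambda>x. B * f x)" using assms(1) by simp
  show "(\<lambda>x. f x * g x) \<in> borel_measurable N" using assms(1,2) by measurable
  show "AE x in N. norm (f x * g x) \<le> norm (B * f x)"
  proof (rule AE_I2)
    fix x assume x: "x \<in> space N"
    have "\<bar>f x\<bar> * \<bar>g x\<bar> \<le> \<bar>f x\<bar> * B" using assms(3)[OF x] by (intro mult_left_mono) auto
    moreover have "B \<ge> 0" using assms(3)[OF x] by linarith
    ultimately show "norm (f x * g x) \<le> norm (B * f x)" by (simp add: abs_mult mult.commute)
  qed
qed

theorem lemma3:
  fixes mu :: "'t measure" and p :: "'p \<Rightarrow> 't \<Rightarrow> real" and R :: "'t \<Rightarrow> real"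
    and M :: "'w measure" and X :: "nat \<Rightarrow> 'w \<Rightarrow> 't"
    and ths :: "nat \<Rightarrow> 'p" and th :: 'p and t :: nat and \<alpha> \<epsilon> :: real
  assumes dens: "traj_densities mu p"
    and R_meas: "R \<in> borel_measurable mu"
    and R_range: "\<And>x. x \<in> space mu \<Longrightarrow> 0 \<le> R x \<and> R x \<le> 1"
    and t: "t \<ge> 2" and alpha: "\<alpha> > 1"
    and P: "prob_space M"
    and indep: "prob_space.indep_vars M (\<lambda>_. mu) X {1..<t}"
    and distr: "\<And>i. i \<in> {1..<t} \<Longrightarrow> distributed M mu (X i) (\<lambda>x. ennreal (p (ths i) x))"
    and eta_pos: "eta_t mu p ths t th > 0"
    and eps: "\<epsilon> \<ge> 0"
  shows "measure M {\<omega> \<in> space M. J_check mu p R ths \<alpha> t th (\<lambda>i. X i \<omega>) - J_ret mu p R th > \<epsilon>}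
           \<le> exp (- (\<epsilon>\<^sup>2 * eta_t mu p ths t th
                     / (2 * (1 + \<epsilon> / 3 * sqrt (eta_t mu p ths t th / (\<alpha> * ln (real t)))))))
         \<and> (\<epsilon> \<ge> sqrt (\<alpha> * ln (real t) / eta_t mu p ths t th) \<longrightarrow>
         measure M {\<omega> \<in> space M. J_ret mu p R th - J_check mu p R ths \<alpha> t th (\<lambda>i. X i \<omega>) > \<epsilon>}
           \<le> exp (- (eta_t mu p ths t th / 2
                     * (\<epsilon> - sqrt (\<alpha> * ln (real t) / eta_t mu p ths t th))\<^sup>2)))"
proof -
  interpret P: prob_space M by (rule P)
  define n where "n = t - 1"
  define I where "I = {1..<t}"
  have finI: "finite I" by (simp add: I_def)
  have cardI: "card I = n" by (simp add: I_def n_def)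
  have n: "real n > 0" using t by (simp add: n_def)
  define Phi where "Phi = Phi_mix p ths t"
  define pth where "pth = p th"
  define d2 where "d2 = d2_t mu p ths t th"
  define D where "D = enn2real d2"
  define L where "L = ln (real t)"
  define eta where "eta = eta_t mu p ths t th"
  define Mt where "Mt = M_t mu p ths \<alpha> t th"
  have L: "L > 0" using t by (simp add: L_def)
  have d2fin: "d2 \<noteq> \<infinity>" using eta_pos by (auto simp: eta_t_def d2_def)
  have eta_eq: "eta = real n / D" using d2fin by (simp add: eta_def eta_t_def d2_def D_def n_def)
  have D: "D > 0"
  proof -
    have "D \<ge> 0" by (simp add: D_def)
    moreover have "D \<noteq> 0" using eta_pos eta_eq by (auto simp: eta_def)
    ultimately show ?thesis by simp
  qed
  have Mt_eq: "Mt = sqrt (real n * D / (\<alpha> * L))" by (simp add: Mt_def M_t_def n_def D_def d2_def L_def)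
  have Mt: "Mt > 0" unfolding Mt_eq using n D L alpha by simp

  have pm[measurable]: "\<And>th. p th \<in> borel_measurable mu"
    and pnn: "\<And>th x. x \<in> space mu \<Longrightarrow> 0 \<le> p th x"
    and p1: "\<And>th. (\<integral>\<^sup>+ x. ennreal (p th x) \<partial>mu) = 1"
    using dens by (auto simp: traj_densities_def)
  note R_meas[measurable]
  have pint: "integrable mu (p th')" for th'
    by (rule integrableI_nonneg) (auto simp: p1 pnn intro!: AE_I2)
  have Phi_m[measurable]: "Phi \<in> borel_measurable mu"
    unfolding Phi_def Phi_mix_def by measurable
  have Phi_nn: "0 \<le> Phi x" if "x \<in> space mu" for x
    unfolding Phi_def Phi_mix_def using pnn[OF that] by (auto intro!: sum_nonneg divide_nonneg_nonneg)
  have Phi_int: "integrable mu Phi"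
    unfolding Phi_def Phi_mix_def by (intro integrable_divide Bochner_Integration.integrable_sum pint)
  define q where "q = (\<lambda>x. if Phi x = 0 then 0 else (pth x)\<^sup>2 / Phi x)"
  have q_m[measurable]: "q \<in> borel_measurable mu" unfolding q_def pth_def by measurable
  have q_nn: "0 \<le> q x" if "x \<in> space mu" for x
    unfolding q_def using Phi_nn[OF that] by auto
  have AEc: "AE x in mu. Phi x = 0 \<longrightarrow> pth x = 0"
    and d2_eq: "d2 = (\<integral>\<^sup>+ x. ennreal (q x) \<partial>mu)"
  proof -
    have e: "d2 = d2_div mu pth Phi" by (simp add: d2_def d2_t_def pth_def Phi_def)
    show "AE x in mu. Phi x = 0 \<longrightarrow> pth x = 0"
      using d2fin unfolding e d2_div_def by (auto split: if_splits)
    thus "d2 = (\<integral>\<^sup>+ x. ennreal (q x) \<partial>mu)"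
      unfolding e d2_div_def q_def by simp
  qed
  have q_int: "integrable mu q"
    by (rule integrableI_nonneg) (use d2fin d2_eq q_nn in \<open>auto intro!: AE_I2 simp: top.not_eq_extremum\<close>)
  have Dq: "D = (\<integral>x. q x \<partial>mu)"
  proof -
    have "(\<integral>\<^sup>+ x. ennreal (q x) \<partial>mu) = ennreal (\<integral>x. q x \<partial>mu)"
      by (rule nn_integral_eq_integral[OF q_int]) (use q_nn in \<open>auto intro!: AE_I2\<close>)
    moreover have "(\<integral>x. q x \<partial>mu) \<ge> 0" by (rule integral_nonneg_AE) (use q_nn in \<open>auto intro!: AE_I2\<close>)
    ultimately show ?thesis by (simp add: D_def d2_eq)
  qed
  define g where "g = (\<lambda>x. min Mt (pth x / Phi x) * R x)"
  have g_m[measurable]: "g \<in> borel_measurable mu" unfolding g_def pth_def by measurable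
  have g_bnd: "0 \<le> g x \<and> g x \<le> Mt" if x: "x \<in> space mu" for x
  proof -
    have w: "0 \<le> pth x / Phi x" using pnn[OF x] Phi_nn[OF x] by (simp add: pth_def)
    have m0: "0 \<le> min Mt (pth x / Phi x)" using w Mt by simp
    have "min Mt (pth x / Phi x) * R x \<le> min Mt (pth x / Phi x) * 1"
      using R_range[OF x] m0 by (intro mult_left_mono) auto
    thus ?thesis using m0 R_range[OF x] by (auto simp: g_def)
  qed
  have g_abs: "\<bar>g x\<bar> \<le> Mt" if "x \<in> space mu" for x using g_bnd[OF that] by simp
  have g2_abs: "\<bar>(g x)\<^sup>2\<bar> \<le> Mt\<^sup>2" if "x \<in> space mu" for x
    using g_bnd[OF that] by (simp add: power_mono)
  have pw1: "Phi x * (g x)\<^sup>2 \<le> q x" if x: "x \<in> space mu" for x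
  proof (cases "Phi x = 0")
    case True thus ?thesis by (simp add: q_def)
  next
    case False
    hence Ph: "Phi x > 0" using Phi_nn[OF x] by simp
    have w: "0 \<le> pth x / Phi x" using pnn[OF x] Phi_nn[OF x] by (simp add: pth_def)
    have "g x \<le> pth x / Phi x"
    proof -
      have "g x \<le> min Mt (pth x / Phi x)"
        unfolding g_def using R_range[OF x] w Mt by (intro mult_left_le) auto
      thus ?thesis by simp
    qed
    hence "(g x)\<^sup>2 \<le> (pth x / Phi x)\<^sup>2" using g_bnd[OF x] by (intro power_mono) auto
    hence "Phi x * (g x)\<^sup>2 \<le> Phi x * (pth x / Phi x)\<^sup>2" using Ph by (intro mult_left_mono) auto
    also have "\<dots> = q x" using Ph by (simp add: q_def power2_eq_square)
    finally show ?thesis .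
  qed
  define h where "h = (\<lambda>x. R x * (pth x / Phi x) * Phi x)"
  have h_m[measurable]: "h \<in> borel_measurable mu" unfolding h_def pth_def by measurable
  have pw2: "0 \<le> h x - Phi x * g x \<and> h x - Phi x * g x \<le> q x / Mt" if x: "x \<in> space mu" for x
  proof (cases "Phi x = 0")
    case True thus ?thesis by (simp add: q_def h_def)
  next
    case False
    hence Ph: "Phi x > 0" using Phi_nn[OF x] by simp
    define w where "w = pth x / Phi x"
    have w: "0 \<le> w" using pnn[OF x] Phi_nn[OF x] by (simp add: pth_def w_def)
    have eq: "h x - Phi x * g x = Phi x * R x * (w - min Mt w)"
      by (simp add: h_def g_def w_def algebra_simps)
    have a: "0 \<le> w - min Mt w" by simp
    have b: "w - min Mt w \<le> w\<^sup>2 / Mt"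
    proof (cases "w \<le> Mt")
      case True thus ?thesis using Mt by simp
    next
      case False
      hence "w * 1 \<le> w * (w / Mt)" using Mt w by (intro mult_left_mono) auto
      thus ?thesis using False Mt by (simp add: power2_eq_square)
    qed
    have "Phi x * R x * (w - min Mt w) \<le> Phi x * 1 * (w - min Mt w)"
      using R_range[OF x] Ph a by (intro mult_right_mono mult_left_mono) auto
    also have "\<dots> \<le> Phi x * (w\<^sup>2 / Mt)" using b Ph by (simp only: mult_1_right) (rule mult_left_mono, auto)
    also have "\<dots> = q x / Mt" using Ph by (simp add: q_def w_def power2_eq_square)
    finally show ?thesis using eq a Ph R_range[OF x] by simp
  qed
  have Jh: "J_ret mu p R th = (\<integral>x. h x \<partial>mu)"
    unfolding J_ret_def
  proof (rule integral_cong_AE)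
    show "AE x in mu. R x * p th x = h x"
      using AEc by eventually_elim (auto simp: h_def pth_def)
  qed (auto simp: pth_def)
  have h_int: "integrable mu h"
  proof (rule Bochner_Integration.integrable_bound[where f = pth])
    show "integrable mu pth" using pint by (simp add: pth_def)
    show "AE x in mu. norm (h x) \<le> norm (pth x)"
    proof (rule AE_I2)
      fix x assume x: "x \<in> space mu"
      show "norm (h x) \<le> norm (pth x)"
      proof (cases "Phi x = 0")
        case True thus ?thesis by (simp add: h_def)
      next
        case False
        hence "h x = R x * pth x" by (simp add: h_def)
        moreover have "\<bar>R x * pth x\<bar> \<le> \<bar>pth x\<bar>"
          using R_range[OF x] by (simp add: abs_mult mult_left_le_one_le)
        ultimately show ?thesis by simp
      qed
    qed
  qed simp
  have Phig_int: "integrable mu (\<lambda>x. Phi x * g x)"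
    by (rule integrable_mult_bdd[OF Phi_int g_m g_abs])
  have Phig2_int: "integrable mu (\<lambda>x. Phi x * (g x)\<^sup>2)"
    by (rule integrable_mult_bdd[OF Phi_int _ g2_abs]) simp
  have q_bias: "(\<integral>x. h x \<partial>mu) - (\<integral>x. Phi x * g x \<partial>mu) = (\<integral>x. h x - Phi x * g x \<partial>mu)"
    using h_int Phig_int by simp
  have bias0: "0 \<le> (\<integral>x. h x - Phi x * g x \<partial>mu)"
    by (rule integral_nonneg_AE) (use pw2 in \<open>auto intro!: AE_I2\<close>)
  have bias1: "(\<integral>x. h x - Phi x * g x \<partial>mu) \<le> D / Mt"
  proof -
    have "(\<integral>x. h x - Phi x * g x \<partial>mu) \<le> (\<integral>x. q x / Mt \<partial>mu)"
      by (rule integral_mono) (use pw2 h_int Phig_int q_int in auto)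
    also have "\<dots> = D / Mt" by (simp add: Dq)
    finally show ?thesis .
  qed
  have V1: "(\<integral>x. Phi x * (g x)\<^sup>2 \<partial>mu) \<le> D"
    unfolding Dq by (rule integral_mono) (use pw1 Phig2_int q_int in auto)
  have Xm: "X i \<in> measurable M mu" if "i \<in> I" for i
    using distr[of i] that by (auto simp: I_def distributed_def)
  define Y where "Y = (\<lambda>i \<omega>. g (X i \<omega>))"
  have Ym: "Y i \<in> borel_measurable M" if "i \<in> I" for i
    unfolding Y_def using Xm[OF that] by measurable
  have indY: "P.indep_vars (\<lambda>_. borel) Y I"
    unfolding Y_def
    by (rule P.indep_vars_compose2[where Y = "\<lambda>i. g", OF indep[folded I_def]]) auto
  have bndY: "0 \<le> Y i \<omega> \<and> Y i \<omega> \<le> Mt" if "i \<in> I" "\<omega> \<in> space M" for i \<omega>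
    unfolding Y_def by (rule g_bnd) (rule measurable_space[OF Xm[OF that(1)] that(2)])
  have EY: "P.expectation (Y i) = (\<integral>x. p (ths i) x * g x \<partial>mu)" if "i \<in> I" for i
    unfolding Y_def using distributed_integral[OF distr[of i] g_m] that pnn by (auto simp: I_def)
  have EY2: "P.expectation (\<lambda>\<omega>. (Y i \<omega>)\<^sup>2) = (\<integral>x. p (ths i) x * (g x)\<^sup>2 \<partial>mu)" if "i \<in> I" for i
    unfolding Y_def using distributed_integral[OF distr[of i], of "\<lambda>x. (g x)\<^sup>2"] that pnn by (auto simp: I_def)
  have sumPhi: "(\<Sum>i\<in>I. p (ths i) x * f x) = real n * (Phi x * f x)" for x and f :: "'t \<Rightarrow> real"
    using n by (simp add: Phi_def Phi_mix_def I_def n_def sum_distrib_right)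
  have SE: "(\<Sum>i\<in>I. P.expectation (Y i)) = real n * (\<integral>x. Phi x * g x \<partial>mu)"
  proof -
    have "(\<Sum>i\<in>I. P.expectation (Y i)) = (\<Sum>i\<in>I. (\<integral>x. p (ths i) x * g x \<partial>mu))"
      using EY by simp
    also have "\<dots> = (\<integral>x. (\<Sum>i\<in>I. p (ths i) x * g x) \<partial>mu)"
      by (rule Bochner_Integration.integral_sum[symmetric]) (rule integrable_mult_bdd[OF pint g_m g_abs])
    also have "\<dots> = real n * (\<integral>x. Phi x * g x \<partial>mu)"
      by (simp add: sumPhi)
    finally show ?thesis .
  qed
  have SE2: "(\<Sum>i\<in>I. P.expectation (\<lambda>\<omega>. (Y i \<omega>)\<^sup>2)) \<le> real n * D"
  proof -
    have "(\<Sum>i\<in>I. P.expectation (\<lambda>\<omega>. (Y i \<omega>)\<^sup>2)) = (\<Sum>i\<in>I. (\<integral>x. p (ths i) x * (g x)\<^sup>2 \<partial>mu))"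
      using EY2 by simp
    also have "\<dots> = (\<integral>x. (\<Sum>i\<in>I. p (ths i) x * (g x)\<^sup>2) \<partial>mu)"
      by (rule Bochner_Integration.integral_sum[symmetric]) (rule integrable_mult_bdd[OF pint _ g2_abs], simp)
    also have "\<dots> = real n * (\<integral>x. Phi x * (g x)\<^sup>2 \<partial>mu)"
      using sumPhi[of _ "\<lambda>x. (g x)\<^sup>2"] by simp
    also have "\<dots> \<le> real n * D" using V1 n by simp
    finally show ?thesis .
  qed
  define bias where "bias = (\<integral>x. h x - Phi x * g x \<partial>mu)"
  have Jeq: "J_ret mu p R th = (\<Sum>i\<in>I. P.expectation (Y i)) / real n + bias"
    using n by (simp add: Jh SE bias_def q_bias[symmetric])
  have Jc: "J_check mu p R ths \<alpha> t th (\<lambda>i. X i \<omega>) = (\<Sum>i\<in>I. Y i \<omega>) / real n" for \<omega>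
    by (simp add: J_check_def Y_def g_def Mt_def pth_def Phi_def I_def n_def)
  have sumYm: "(\<lambda>\<omega>. \<Sum>i\<in>I. Y i \<omega>) \<in> borel_measurable M"
    by (rule borel_measurable_sum) (rule Ym)
  have sq1: "sqrt (eta / (\<alpha> * L)) = Mt / D"
  proof -
    have e1: "real n * D / (\<alpha> * L) / D\<^sup>2 = eta / (\<alpha> * L)"
      using D by (simp add: eta_eq field_simps power2_eq_square)
    have "Mt / D = sqrt (real n * D / (\<alpha> * L)) / sqrt (D\<^sup>2)" using D by (simp add: Mt_eq)
    also have "\<dots> = sqrt (real n * D / (\<alpha> * L) / D\<^sup>2)" by (rule real_sqrt_divide[symmetric])
    also have "\<dots> = sqrt (eta / (\<alpha> * L))" by (simp only: e1)
    finally show ?thesis by (rule sym)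
  qed
  have sq2: "sqrt (\<alpha> * L / eta) = D / Mt"
  proof -
    have e1: "D\<^sup>2 / (real n * D / (\<alpha> * L)) = \<alpha> * L / eta"
      using D n L alpha by (simp add: eta_eq field_simps power2_eq_square)
    have "D / Mt = sqrt (D\<^sup>2) / sqrt (real n * D / (\<alpha> * L))" using D by (simp add: Mt_eq)
    also have "\<dots> = sqrt (D\<^sup>2 / (real n * D / (\<alpha> * L)))" by (rule real_sqrt_divide[symmetric])
    also have "\<dots> = sqrt (\<alpha> * L / eta)" by (simp only: e1)
    finally show ?thesis by (rule sym)
  qed
  have nD: "real n * D > 0" using n D by simp
  have part1: "measure M {\<omega> \<in> space M. J_check mu p R ths \<alpha> t th (\<lambda>i. X i \<omega>) - J_ret mu p R th > \<epsilon>}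
      \<le> exp (- (\<epsilon>\<^sup>2 * eta / (2 * (1 + \<epsilon> / 3 * sqrt (eta / (\<alpha> * L))))))"
  proof (cases "\<epsilon> = 0")
    case True thus ?thesis by (simp add: P.prob_le_1)
  next
    case False
    hence e: "\<epsilon> > 0" using eps by simp
    have "measure M {\<omega> \<in> space M. J_check mu p R ths \<alpha> t th (\<lambda>i. X i \<omega>) - J_ret mu p R th > \<epsilon>}
        \<le> measure M {\<omega> \<in> space M. (\<Sum>i\<in>I. Y i \<omega>) - (\<Sum>i\<in>I. P.expectation (Y i)) \<ge> real n * \<epsilon>}"
    proof (rule P.finite_measure_mono)
      show "{\<omega> \<in> space M. (\<Sum>i\<in>I. Y i \<omega>) - (\<Sum>i\<in>I. P.expectation (Y i)) \<ge> real n * \<epsilon>} \<in> sets M"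
        using sumYm by measurable
      show "{\<omega> \<in> space M. J_check mu p R ths \<alpha> t th (\<lambda>i. X i \<omega>) - J_ret mu p R th > \<epsilon>}
          \<subseteq> {\<omega> \<in> space M. (\<Sum>i\<in>I. Y i \<omega>) - (\<Sum>i\<in>I. P.expectation (Y i)) \<ge> real n * \<epsilon>}"
      proof safe
        fix \<omega> assume "\<omega> \<in> space M" and gt: "J_check mu p R ths \<alpha> t th (\<lambda>i. X i \<omega>) - J_ret mu p R th > \<epsilon>"
        have "(\<Sum>i\<in>I. Y i \<omega>) / real n - (\<Sum>i\<in>I. P.expectation (Y i)) / real n > \<epsilon>"
          using gt bias0 unfolding Jc Jeq bias_def by linarith
        hence "((\<Sum>i\<in>I. Y i \<omega>) - (\<Sum>i\<in>I. P.expectation (Y i))) / real n > \<epsilon>"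
          by (simp add: diff_divide_distrib)
        thus "real n * \<epsilon> \<le> (\<Sum>i\<in>I. Y i \<omega>) - (\<Sum>i\<in>I. P.expectation (Y i))"
          using n by (simp add: field_simps)
      qed
    qed
    also have "\<dots> \<le> exp (- ((real n * \<epsilon>)\<^sup>2 / (2 * (real n * D + Mt * (real n * \<epsilon>) / 3))))"
      by (rule P.bernstein_upper[OF finI indY bndY Mt SE2 nD]) (use n e in auto)
    also have "(real n * \<epsilon>)\<^sup>2 / (2 * (real n * D + Mt * (real n * \<epsilon>) / 3))
        = \<epsilon>\<^sup>2 * eta / (2 * (1 + \<epsilon> / 3 * sqrt (eta / (\<alpha> * L))))"
    proof -
      have p1: "0 < D * (real n * 6) + Mt * (\<epsilon> * (real n * 2))" using n D Mt e by (intro add_pos_pos mult_pos_pos) auto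
      have p2: "0 < D * 6 + Mt * (\<epsilon> * 2)" using n D Mt e by (intro add_pos_pos mult_pos_pos) auto
      have "(real n * \<epsilon>)\<^sup>2 / (2 * (real n * D + Mt * (real n * \<epsilon>) / 3))
         = \<epsilon> * (\<epsilon> * (real n * (real n * 3))) / (D * (real n * 6) + Mt * (\<epsilon> * (real n * 2)))"
        by (simp add: field_simps power2_eq_square)
      also have "\<dots> = \<epsilon> * (\<epsilon> * (real n * 3)) / (D * 6 + Mt * (\<epsilon> * 2))"
        using p1 p2 n by (simp add: frac_eq_eq algebra_simps)
      also have "\<dots> = \<epsilon>\<^sup>2 * eta / (2 * (1 + \<epsilon> / 3 * sqrt (eta / (\<alpha> * L))))"
        unfolding sq1 unfolding eta_eq using n D Mt e by (simp add: field_simps power2_eq_square)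
      finally show ?thesis .
    qed
    finally show ?thesis .
  qed
  have part2: "measure M {\<omega> \<in> space M. J_ret mu p R th - J_check mu p R ths \<alpha> t th (\<lambda>i. X i \<omega>) > \<epsilon>}
      \<le> exp (- (eta / 2 * (\<epsilon> - sqrt (\<alpha> * L / eta))\<^sup>2))"
    if ge: "\<epsilon> \<ge> sqrt (\<alpha> * L / eta)"
  proof (cases "\<epsilon> = D / Mt")
    case True thus ?thesis using sq2 by (simp add: P.prob_le_1)
  next
    case False
    hence e: "\<epsilon> - D / Mt > 0" using ge sq2 by simp
    have "measure M {\<omega> \<in> space M. J_ret mu p R th - J_check mu p R ths \<alpha> t th (\<lambda>i. X i \<omega>) > \<epsilon>}
        \<le> measure M {\<omega> \<in> space M. (\<Sum>i\<in>I. P.expectation (Y i)) - (\<Sum>i\<in>I. Y i \<omega>) \<ge> real n * (\<epsilon> - D / Mt)}"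
    proof (rule P.finite_measure_mono)
      show "{\<omega> \<in> space M. (\<Sum>i\<in>I. P.expectation (Y i)) - (\<Sum>i\<in>I. Y i \<omega>) \<ge> real n * (\<epsilon> - D / Mt)} \<in> sets M"
        using sumYm by measurable
      show "{\<omega> \<in> space M. J_ret mu p R th - J_check mu p R ths \<alpha> t th (\<lambda>i. X i \<omega>) > \<epsilon>}
          \<subseteq> {\<omega> \<in> space M. (\<Sum>i\<in>I. P.expectation (Y i)) - (\<Sum>i\<in>I. Y i \<omega>) \<ge> real n * (\<epsilon> - D / Mt)}"
      proof safe
        fix \<omega> assume "\<omega> \<in> space M" and gt: "J_ret mu p R th - J_check mu p R ths \<alpha> t th (\<lambda>i. X i \<omega>) > \<epsilon>"
        have "(\<Sum>i\<in>I. P.expectation (Y i)) / real n - (\<Sum>i\<in>I. Y i \<omega>) / real n > \<epsilon> - D / Mt"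
          using gt bias1 unfolding Jc Jeq bias_def by linarith
        hence "((\<Sum>i\<in>I. P.expectation (Y i)) - (\<Sum>i\<in>I. Y i \<omega>)) / real n > \<epsilon> - D / Mt"
          by (simp add: diff_divide_distrib)
        thus "real n * (\<epsilon> - D / Mt) \<le> (\<Sum>i\<in>I. P.expectation (Y i)) - (\<Sum>i\<in>I. Y i \<omega>)"
          using n by (simp add: field_simps)
      qed
    qed
    also have "\<dots> \<le> exp (- ((real n * (\<epsilon> - D / Mt))\<^sup>2 / (2 * (real n * D))))"
      by (rule P.bernstein_lower[OF finI indY bndY SE2 nD]) (use n e in auto)
    also have "(real n * (\<epsilon> - D / Mt))\<^sup>2 / (2 * (real n * D)) = eta / 2 * (\<epsilon> - sqrt (\<alpha> * L / eta))\<^sup>2"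
      unfolding sq2 unfolding eta_eq using n D by (simp add: field_simps power2_eq_square)
    finally show ?thesis .
  qed
  show ?thesis
    using part1 part2 unfolding eta_def L_def by blast
qed

end
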